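(* For all $\nu\in\mathbb C$, integers $m\ge0$ and $x\in\mathbb C\setminus\{0\}$, $$x^mR_{m,\nu}(x;q)=\sum_{n=0}^m x^{2n}\sum_{j=0}^{m-n}\frac{(q^{n-m};q)_j(q^{n+1};q)_j}{(q;q)_j(q;q)_j}\,q^{j(\nu+m-n)}.$$ If moreover $q^{\nu+i}\ne1$ for all integers $i\ge0$, then $$R_{m,\nu}(x;q)=\sum_{n=0}^m x^{2n-m}\frac{(q^\nu;q)_{m-n}}{(q;q)_n}\sum_{j=0}^{n}\frac{(q^{-n};q)_j(q^{\nu+m-n};q)_j}{(q;q)_j(q^\nu;q)_j}\,q^{j(n+1)}.$$
   Context: Fix $0<q<1$; $(a;q)_0=1$, $(a;q)_k=\prod_{i=0}^{k-1}(1-aq^i)$. The $q$-Lommel functions $R_{m,\nu}(x;q)$ are defined by $R_{-1,\nu}=0$, $R_{0,\nu}=1$ and $R_{m+1,\nu}(x;q)=\big(x+\frac{1-q^\nu}{x}\big)R_{m,\nu+1}(x;q)-R_{m-1,\nu+2}(x;q)$ for $m\ge0$. *)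

theory Defs
  imports "HOL-Analysis.Analysis"
begin

definition qpoch :: "complex \<Rightarrow> complex \<Rightarrow> nat \<Rightarrow> complex" where
  "qpoch a q k = (\<Prod>i<k. (1 - a * q ^ i))"

text \<open>q-Lommel functions R_{m,nu}(x;q); q^nu is (complex_of_real q) powr nu.
  R_{1,nu} = (x + (1-q^nu)/x) R_{0,nu+1} - R_{-1,nu+2} with R_{-1}=0, R_0=1.\<close>
fun qLommel :: "real \<Rightarrow> nat \<Rightarrow> complex \<Rightarrow> complex \<Rightarrow> complex" where
  "qLommel q 0 \<nu> x = 1"
| "qLommel q (Suc 0) \<nu> x = (x + (1 - complex_of_real q powr \<nu>) / x) * qLommel q 0 (\<nu> + 1) x"
| "qLommel q (Suc (Suc m)) \<nu> x =
     (x + (1 - complex_of_real q powr \<nu>) / x) * qLommel q (Suc m) (\<nu> + 1) x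
     - qLommel q m (\<nu> + 2) x"

end

theory Submission
  imports Defs
begin


definition qf :: "complex \<Rightarrow> nat \<Rightarrow> complex" where "qf Q n = qpoch Q Q n"
definition gb :: "complex \<Rightarrow> nat \<Rightarrow> nat \<Rightarrow> complex" where
  "gb Q k j = (if j \<le> k then qf Q k / (qf Q j * qf Q (k - j)) else 0)"
fun sg :: "complex \<Rightarrow> nat \<Rightarrow> complex" where
  "sg Q 0 = 1" | "sg Q (Suc j) = -(Q^j * sg Q j)"
definition co :: "complex \<Rightarrow> nat \<Rightarrow> nat \<Rightarrow> nat \<Rightarrow> complex" where
  "co Q k n j = sg Q j * gb Q k j * gb Q (n+j) j"
definition aa :: "complex \<Rightarrow> nat \<Rightarrow> nat \<Rightarrow> nat \<Rightarrow> complex" where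
  "aa Q m n j = (if n \<le> m then co Q (m-n) n j else 0)"
definition cc :: "complex \<Rightarrow> nat \<Rightarrow> nat \<Rightarrow> complex \<Rightarrow> complex" where
  "cc Q m n t = (\<Sum>j<Suc m. aa Q m n j * t^j)"
definition AA :: "complex \<Rightarrow> nat \<Rightarrow> complex \<Rightarrow> complex \<Rightarrow> complex" where
  "AA Q m t x = (\<Sum>n<Suc m. x^(2*n) * cc Q m n t)"

lemma qpoch_0[simp]: "qpoch a Q 0 = 1" by (simp add: qpoch_def)
lemma qpoch_Suc: "qpoch a Q (Suc n) = qpoch a Q n * (1 - a * Q^n)"
  by (simp add: qpoch_def)
lemma qpoch_add: "qpoch a Q (i + l) = qpoch a Q i * qpoch (a * Q^i) Q l"
  by (induction l) (simp_all add: qpoch_Suc algebra_simps power_add)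
lemma qpoch_Suc': "qpoch a Q (Suc n) = (1 - a) * qpoch (a*Q) Q n"
  using qpoch_add[of a Q 1 n] by (simp add: qpoch_Suc)

locale qctx = fixes Q :: complex assumes Qnz: "Q \<noteq> 0" and Qpow: "\<And>i. Q^Suc i \<noteq> 1"
begin

lemma qf_Suc: "qf Q (Suc n) = qf Q n * (1 - Q^Suc n)"
  by (simp add: qf_def qpoch_Suc)
lemma qf_0[simp]: "qf Q 0 = 1" by (simp add: qf_def)
lemma qf_nz[simp]: "qf Q n \<noteq> 0"
  by (induction n) (use Qpow in \<open>auto simp: qf_Suc\<close>)

lemma gb_0[simp]: "gb Q k 0 = 1" by (simp add: gb_def)
lemma gb_gt: "k < j \<Longrightarrow> gb Q k j = 0" by (simp add: gb_def)
lemma gb_diag[simp]: "gb Q k k = 1" by (simp add: gb_def)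
lemma gb_0_Suc[simp]: "gb Q 0 (Suc j) = 0" by (simp add: gb_def)

lemma pascal_aux:
  fixes kk aa dd uu vv :: complex
  assumes "aa \<noteq> 0" "dd \<noteq> 0" "1 - uu \<noteq> 0" "1 - vv \<noteq> 0"
  shows "kk * (1 - uu * vv) / (aa * (1 - uu) * (dd * (1 - vv))) = kk / (aa * (dd * (1 - vv))) + uu * (kk / (aa * (1 - uu) * dd))"
proof -
  define a where "a = 1 - uu"
  define b where "b = 1 - vv"
  have a: "a \<noteq> 0" and b: "b \<noteq> 0" using assms by (auto simp: a_def b_def)
  have u: "uu = 1 - a" and v: "vv = 1 - b" by (auto simp: a_def b_def)
  show ?thesis unfolding u v using a b assms(1,2) by (simp add: field_simps)
qed

lemma gb_pascal: "gb Q (Suc k) (Suc j) = gb Q k j + Q^Suc j * gb Q k (Suc j)"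
proof (cases "j < k")
  case True
  then obtain d where k: "k = Suc (j + d)" using less_imp_Suc_add by blast
  have n2: "1 - Q^Suc d \<noteq> 0" "1 - Q^Suc j \<noteq> 0" using Qpow by (metis eq_iff_diff_eq_0)+
  have kk: "Suc k = Suc j + Suc d" using k by simp
  have pw: "Q^Suc k = Q^Suc j * Q^Suc d" by (simp only: kk power_add)
  have e1: "qf Q (Suc k) = qf Q k * (1 - Q^(Suc j) * Q^(Suc d))"
    by (simp only: qf_Suc pw)
  have e2: "qf Q (Suc d) = qf Q d * (1 - Q^Suc d)" by (rule qf_Suc)
  have e3: "qf Q (Suc j) = qf Q j * (1 - Q^Suc j)" by (rule qf_Suc)
  have g1: "gb Q (Suc k) (Suc j) = qf Q (Suc k) / (qf Q (Suc j) * qf Q (Suc d))"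
    by (simp add: gb_def k)
  have g2: "gb Q k j = qf Q k / (qf Q j * qf Q (Suc d))" by (simp add: gb_def k)
  have g3: "gb Q k (Suc j) = qf Q k / (qf Q (Suc j) * qf Q d)" by (simp add: gb_def k)
  show ?thesis unfolding g1 g2 g3 e1 e2 e3
    by (rule pascal_aux) (use n2 in auto)
next
  case False
  then show ?thesis by (cases "j = k") (simp_all add: gb_gt)
qed

lemma sg_Suc': "Q^j * sg Q j = - sg Q (Suc j)" by simp

lemma coef_rec:
  "aa Q (Suc (Suc m)) n j =
     (if n = 0 then 0 else Q^j * aa Q (Suc m) (n-1) j) + Q^j * aa Q (Suc m) n j
     - (if j = 0 then 0 else Q^(j-1) * aa Q (Suc m) n (j-1))
     - (if n = 0 then 0 else Q^(2*j) * aa Q m (n-1) j)"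
proof (cases "n \<le> Suc (Suc m)")
  case False
  then show ?thesis by (auto simp: aa_def)
next
  case True
  then obtain k where k: "Suc (Suc m) = n + k" using le_Suc_ex by blast
  show ?thesis
  proof (cases j)
    case 0
    then show ?thesis using k by (cases n; cases k) (auto simp: aa_def co_def)
  next
    case (Suc j')
    show ?thesis
    proof (cases n)
      case 0
      have "aa Q (Suc (Suc m)) n j = sg Q j * gb Q (Suc (Suc m)) j" using 0 by (simp add: aa_def co_def)
      also have "\<dots> = sg Q j * (gb Q (Suc m) j' + Q^j * gb Q (Suc m) j)"
        using Suc gb_pascal by simp
      finally show ?thesis using 0 Suc by (simp add: aa_def co_def algebra_simps)
    next
      case (Suc n')
      show ?thesis
      proof (cases k)
        case 0
        then show ?thesis using k \<open>n = Suc n'\<close> \<open>j = Suc j'\<close> by (simp add: aa_def co_def)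
      next
        case (Suc k')
        have m: "m = n' + k'" using k \<open>n = Suc n'\<close> Suc by simp
        have p1: "gb Q (Suc k') (Suc j') = gb Q k' j' + Q^Suc j' * gb Q k' (Suc j')" by (rule gb_pascal)
        have p2: "gb Q (Suc (Suc (n' + j'))) (Suc j') = gb Q (Suc (n'+j')) j' + Q^Suc j' * gb Q (Suc (n'+j')) (Suc j')" by (rule gb_pascal)
        have s: "sg Q (Suc j') = - (Q^j' * sg Q j')" by simp
        define P where "P = Q^j'"
        define a where "a = gb Q k' j'"
        define b where "b = gb Q k' (Suc j')"
        define c where "c = gb Q (Suc (n'+j')) j'"
        define d where "d = gb Q (Suc (n'+j')) (Suc j')"
        define sj where "sj = sg Q j'"
        have QP: "Q^j = Q*P" using \<open>j = Suc j'\<close> by (simp add: P_def)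
        have QP2: "Q^(2*j) = (Q*P)*(Q*P)" unfolding mult_2 power_add QP ..
        have e1: "aa Q (Suc (Suc m)) n j = (-(P * sj)) * (a + Q*P*b) * (c + Q*P*d)"
          using \<open>n = Suc n'\<close> \<open>j = Suc j'\<close> m p1 p2
          by (simp add: aa_def co_def a_def b_def c_def d_def sj_def P_def)
        have e2: "aa Q (Suc m) (n-1) j = (-(P * sj)) * (a + Q*P*b) * d"
          using \<open>n = Suc n'\<close> \<open>j = Suc j'\<close> m p1
          by (simp add: aa_def co_def a_def b_def c_def d_def sj_def P_def)
        have e3: "aa Q (Suc m) n j = (-(P * sj)) * b * (c + Q*P*d)"
          using \<open>n = Suc n'\<close> \<open>j = Suc j'\<close> m p2
          by (simp add: aa_def co_def a_def b_def c_def d_def sj_def P_def)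
        have e4: "aa Q (Suc m) n (j-1) = sj * a * c"
          using \<open>n = Suc n'\<close> \<open>j = Suc j'\<close> m
          by (simp add: aa_def co_def a_def b_def c_def d_def sj_def P_def)
        have e5: "aa Q m (n-1) j = (-(P * sj)) * b * d"
          using \<open>n = Suc n'\<close> \<open>j = Suc j'\<close> m
          by (simp add: aa_def co_def a_def b_def c_def d_def sj_def P_def)
        have Pj: "Q^(j-1) = P" using \<open>j = Suc j'\<close> by (simp add: P_def)
        show ?thesis using \<open>n = Suc n'\<close> \<open>j = Suc j'\<close>
          unfolding e1 e2 e3 e4 e5 QP QP2 Pj by (simp add: algebra_simps)
      qed
    qed
  qed
qed


lemma aa_zero_j: "m < j \<Longrightarrow> aa Q m n j = 0"
  by (simp add: aa_def co_def gb_gt)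
lemma aa_zero_n: "m < n \<Longrightarrow> aa Q m n j = 0"
  by (simp add: aa_def)

lemma cc_ext: "Suc m \<le> N \<Longrightarrow> cc Q m n t = (\<Sum>j<N. aa Q m n j * t^j)"
  unfolding cc_def by (rule sum.mono_neutral_left) (auto simp: aa_zero_j)

lemma cc_zero: "m < n \<Longrightarrow> cc Q m n t = 0"
  by (simp add: cc_def aa_zero_n)

lemma AA_ext: "Suc m \<le> N \<Longrightarrow> AA Q m t x = (\<Sum>n<N. x^(2*n) * cc Q m n t)"
  unfolding AA_def by (rule sum.mono_neutral_left) (auto simp: cc_zero)

lemma cc_rec: "cc Q (Suc (Suc m)) n t =
   (if n = 0 then 0 else cc Q (Suc m) (n-1) (t*Q)) + (1 - t) * cc Q (Suc m) n (t*Q)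
   - (if n = 0 then 0 else cc Q m (n-1) (t*Q^2))"
proof -
  define N where "N = Suc (Suc (Suc m))"
  define F1 where "F1 j = (if n = 0 then 0 else Q^j * aa Q (Suc m) (n-1) j) * t^j" for j
  define F2 where "F2 j = Q^j * aa Q (Suc m) n j * t^j" for j
  define F3 where "F3 j = (if j = 0 then 0 else Q^(j-1) * aa Q (Suc m) n (j-1)) * t^j" for j
  define F4 where "F4 j = (if n = 0 then 0 else Q^(2*j) * aa Q m (n-1) j) * t^j" for j
  have "cc Q (Suc (Suc m)) n t = (\<Sum>j<Suc N. aa Q (Suc (Suc m)) n j * t^j)"
    by (rule cc_ext) (simp add: N_def)
  also have "\<dots> = (\<Sum>j<Suc N. F1 j + F2 j - F3 j - F4 j)"
    by (rule sum.cong[OF refl], subst coef_rec) (simp add: F1_def F2_def F3_def F4_def algebra_simps)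
  also have "\<dots> = sum F1 {..<Suc N} + sum F2 {..<Suc N} - sum F3 {..<Suc N} - sum F4 {..<Suc N}"
    by (simp add: sum.distrib sum_subtractf)
  also have "sum F1 {..<Suc N} = (if n = 0 then 0 else cc Q (Suc m) (n-1) (t*Q))"
    by (auto simp: F1_def N_def cc_ext[of "Suc m" "Suc N"] power_mult_distrib mult_ac)
  also have "sum F2 {..<Suc N} = cc Q (Suc m) n (t*Q)"
    by (auto simp: F2_def N_def cc_ext[of "Suc m" "Suc N"] power_mult_distrib mult_ac)
  also have "sum F3 {..<Suc N} = t * cc Q (Suc m) n (t*Q)"
    unfolding sum.lessThan_Suc_shift
    by (simp add: F3_def N_def cc_ext[of "Suc m" "N"] sum_distrib_left power_mult_distrib mult_ac del: sum.lessThan_Suc)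
  also have "sum F4 {..<Suc N} = (if n = 0 then 0 else cc Q m (n-1) (t*Q^2))"
  proof -
    have e: "F4 j = (if n = 0 then 0 else aa Q m (n-1) j * (t*Q^2)^j)" for j
      by (simp add: F4_def power_mult_distrib power_mult)
    show ?thesis unfolding e using cc_ext[of m "Suc N" "n-1" "t*Q^2"] by (simp add: N_def del: sum.lessThan_Suc)
  qed
  finally show ?thesis by (simp add: algebra_simps)
qed

lemma AA_rec: "AA Q (Suc (Suc m)) t x =
   (x^2 + 1 - t) * AA Q (Suc m) (t*Q) x - x^2 * AA Q m (t*Q^2) x"
proof -
  define N where "N = Suc (Suc m)"
  define G1 where "G1 n = x^(2*n) * (if n = 0 then 0 else cc Q (Suc m) (n-1) (t*Q))" for n
  define G2 where "G2 n = x^(2*n) * ((1 - t) * cc Q (Suc m) n (t*Q))" for n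
  define G3 where "G3 n = x^(2*n) * (if n = 0 then 0 else cc Q m (n-1) (t*Q^2))" for n
  have "AA Q (Suc (Suc m)) t x = (\<Sum>n<Suc N. G1 n + G2 n - G3 n)"
    unfolding AA_def N_def by (rule sum.cong[OF refl], subst cc_rec) (simp add: G1_def G2_def G3_def algebra_simps)
  also have "\<dots> = sum G1 {..<Suc N} + sum G2 {..<Suc N} - sum G3 {..<Suc N}"
    by (simp add: sum.distrib sum_subtractf)
  also have "sum G1 {..<Suc N} = x^2 * AA Q (Suc m) (t*Q) x"
    unfolding sum.lessThan_Suc_shift
    by (simp add: G1_def N_def AA_def sum_distrib_left mult_ac power_add power2_eq_square del: sum.lessThan_Suc)
  also have "sum G2 {..<Suc N} = (1 - t) * AA Q (Suc m) (t*Q) x"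
    by (simp add: G2_def N_def AA_ext[of "Suc m" "Suc N"] sum_distrib_left mult_ac del: sum.lessThan_Suc)
  also have "sum G3 {..<Suc N} = x^2 * AA Q m (t*Q^2) x"
    unfolding sum.lessThan_Suc_shift
    by (simp add: G3_def N_def AA_ext[of m N] sum_distrib_left mult_ac power_add power2_eq_square del: sum.lessThan_Suc)
  finally show ?thesis by (simp add: algebra_simps)
qed

end


context qctx begin

lemma absorb_aux:
  fixes kk aa dd uu vv p :: complex
  assumes "aa \<noteq> 0" "dd \<noteq> 0" "1 - uu \<noteq> 0" "1 - vv \<noteq> 0"
  shows "kk / (aa * (1 - uu) * dd) * (1 - uu) * p = kk / (aa * (dd * (1 - vv))) * (p - p * vv)"
proof -
  define a where "a = 1 - uu"
  define b where "b = 1 - vv"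
  have a: "a \<noteq> 0" and b: "b \<noteq> 0" using assms by (auto simp: a_def b_def)
  have u: "uu = 1 - a" and v: "vv = 1 - b" by (auto simp: a_def b_def)
  show ?thesis unfolding u v using a b assms(1,2) by (simp add: field_simps)
qed

lemma gb_absorb: "gb Q k (Suc j) * (1 - Q^Suc j) * Q^j = gb Q k j * (Q^j - Q^k)"
proof (cases "j < k")
  case True
  then obtain d where k: "k = Suc (j + d)" using less_imp_Suc_add by blast
  have n2: "1 - Q^Suc d \<noteq> 0" "1 - Q^Suc j \<noteq> 0" using Qpow by (metis eq_iff_diff_eq_0)+
  have kk: "k = j + Suc d" using k by simp
  have e: "Q^k = Q^j * Q^Suc d" by (simp only: kk power_add)
  have g1: "gb Q k (Suc j) = qf Q k / (qf Q j * (1 - Q^Suc j) * qf Q d)"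
    by (simp add: gb_def k qf_Suc)
  have g2: "gb Q k j = qf Q k / (qf Q j * (qf Q d * (1 - Q^Suc d)))"
    by (simp add: gb_def k qf_Suc)
  show ?thesis unfolding e g1 g2
    by (rule absorb_aux) (use n2 in auto)
next
  case False
  then show ?thesis by (cases "j = k") (simp_all add: gb_gt)
qed

lemma L_G: "qpoch (inverse (Q^k)) Q j * Q^(k*j) = sg Q j * gb Q k j * qf Q j"
proof (induction j)
  case 0 then show ?case by simp
next
  case (Suc j)
  have "qpoch (inverse (Q^k)) Q (Suc j) * Q^(k * Suc j) =
     (qpoch (inverse (Q^k)) Q j * Q^(k*j)) * (Q^k - Q^j)"
    using Qnz by (simp add: qpoch_Suc power_add field_simps)
  also have "\<dots> = sg Q j * qf Q j * (gb Q k j * (Q^j - Q^k)) * (-1)"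
    unfolding Suc by (simp add: algebra_simps)
  also have "\<dots> = sg Q (Suc j) * gb Q k (Suc j) * qf Q (Suc j)"
    unfolding gb_absorb[symmetric] by (simp add: qf_Suc algebra_simps)
  finally show ?case .
qed

lemma L_H: "qpoch (Q^(n+1)) Q j = gb Q (n+j) j * qf Q j"
  using qpoch_add[of Q Q n j] by (simp add: gb_def qf_def[symmetric] field_simps mult_ac)

lemma gb_sym: "gb Q (a+b) a = gb Q (a+b) b"
  by (simp add: gb_def mult_ac)

lemma qbinom: "qpoch z Q k = (\<Sum>i<Suc k. gb Q k i * sg Q i * z^i)"
proof (induction k arbitrary: z)
  case 0 then show ?case by simp
next
  case (Suc k)
  define A where "A i = gb Q k i * sg Q i * Q^i * z^i" for i
  have "qpoch z Q (Suc k) = (1 - z) * (\<Sum>i<Suc k. A i)"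
    unfolding qpoch_Suc' Suc A_def by (simp add: power_mult_distrib mult_ac)
  also have "\<dots> = (\<Sum>i<Suc k. A i) - (\<Sum>i<Suc k. A i * z)"
    by (simp only: sum_distrib_right[symmetric]) (simp add: algebra_simps)
  also have "(\<Sum>i<Suc k. A i) = 1 + (\<Sum>i<Suc k. A (Suc i))"
  proof -
    have "(\<Sum>i<Suc k. A i) = A 0 + (\<Sum>i<k. A (Suc i))"
      by (rule sum.lessThan_Suc_shift)
    also have "(\<Sum>i<k. A (Suc i)) = (\<Sum>i<Suc k. A (Suc i))"
      by (simp add: A_def gb_gt)
    finally show ?thesis by (simp add: A_def)
  qed
  also have "1 + (\<Sum>i<Suc k. A (Suc i)) - (\<Sum>i<Suc k. A i * z) =
     1 + (\<Sum>i<Suc k. A (Suc i) - A i * z)"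
    by (simp add: sum_subtractf del: sum.lessThan_Suc)
  also have "(\<Sum>i<Suc k. A (Suc i) - A i * z) = (\<Sum>i<Suc k. gb Q (Suc k) (Suc i) * sg Q (Suc i) * z^Suc i)"
    by (rule sum.cong[OF refl]) (simp add: A_def gb_pascal algebra_simps)
  also have "1 + (\<Sum>i<Suc k. gb Q (Suc k) (Suc i) * sg Q (Suc i) * z^Suc i) = (\<Sum>i<Suc (Suc k). gb Q (Suc k) i * sg Q i * z^i)"
    by (subst (2) sum.lessThan_Suc_shift) simp
  finally show ?case .
qed

lemma cc_alt: "n \<le> m \<Longrightarrow> cc Q m n t = (\<Sum>i<Suc (m-n). co Q (m-n) n i * t^i)"
  unfolding cc_def
  apply (subst sum.mono_neutral_right[of "{..<Suc m}" "{..<Suc (m-n)}"])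
     apply (auto simp: aa_def co_def gb_gt)
  done

lemma qpoch_nz: "(\<And>i. t * Q^i \<noteq> 1) \<Longrightarrow> qpoch t Q j \<noteq> 0"
  unfolding qpoch_def by (auto simp: prod_zero_iff)

lemma D_eq:
  assumes nm: "n \<le> m" and tq: "\<And>i. t * Q^i \<noteq> 1"
  shows "qpoch t Q (m-n) / qf Q n * (\<Sum>j<Suc n. qpoch (inverse (Q^n)) Q j * qpoch (t*Q^(m-n)) Q j
           / (qf Q j * qpoch t Q j) * Q^(j*(n+1))) = cc Q m n t"
proof -
  define k where "k = m - n"
  have tp: "qpoch t Q j \<noteq> 0" for j using qpoch_nz tq by blast
  have eqG: "qpoch (inverse (Q^n)) Q j = sg Q j * gb Q n j * qf Q j / Q^(n*j)" for j
    using L_G[of n j] Qnz by (simp add: field_simps)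
  have eqT: "qpoch t Q k * qpoch (t*Q^k) Q j = qpoch t Q j * qpoch (t*Q^j) Q k" for j
    using qpoch_add[of t Q k j] qpoch_add[of t Q j k] by (simp add: add.commute)
  have eqP: "Q^(j*(n+1)) = Q^(n*j) * Q^j" for j by (simp add: power_add algebra_simps)
  have step1: "qpoch t Q k / qf Q n * (qpoch (inverse (Q^n)) Q j * qpoch (t*Q^k) Q j
           / (qf Q j * qpoch t Q j) * Q^(j*(n+1)))
        = (sg Q j * gb Q n j * Q^j / qf Q n) * qpoch (t*Q^j) Q k" for j
  proof -
    have "qpoch t Q k / qf Q n * (qpoch (inverse (Q^n)) Q j * qpoch (t*Q^k) Q j
           / (qf Q j * qpoch t Q j) * Q^(j*(n+1)))
        = (qpoch t Q k * qpoch (t*Q^k) Q j) * qpoch (inverse (Q^n)) Q j * Q^(j*(n+1)) / (qf Q n * qf Q j * qpoch t Q j)"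
      by (simp add: field_simps)
    also have "\<dots> = (sg Q j * gb Q n j * Q^j / qf Q n) * qpoch (t*Q^j) Q k"
      unfolding eqT eqG eqP using tp[of j] Qnz by (simp add: field_simps)
    finally show ?thesis .
  qed
  have "qpoch t Q k / qf Q n * (\<Sum>j<Suc n. qpoch (inverse (Q^n)) Q j * qpoch (t*Q^k) Q j
           / (qf Q j * qpoch t Q j) * Q^(j*(n+1)))
      = (\<Sum>j<Suc n. (sg Q j * gb Q n j * Q^j / qf Q n) * qpoch (t*Q^j) Q k)"
    unfolding sum_distrib_left step1 ..
  also have "\<dots> = (\<Sum>j<Suc n. \<Sum>i<Suc k. (gb Q k i * sg Q i * t^i / qf Q n) * (gb Q n j * sg Q j * (Q^Suc i)^j))"
    unfolding qbinom[of "t*Q^_"] sum_distrib_left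
    by (intro sum.cong refl) (simp add: power_mult_distrib power_mult[symmetric] mult.commute[of _ j] algebra_simps)
  also have "\<dots> = (\<Sum>i<Suc k. (gb Q k i * sg Q i * t^i / qf Q n) * qpoch (Q^Suc i) Q n)"
    unfolding qbinom[of "Q^Suc _" n] sum_distrib_left by (rule sum.swap)
  also have "\<dots> = (\<Sum>i<Suc k. co Q k n i * t^i)"
    apply (intro sum.cong refl)
    using L_H[of _ n] gb_sym[of n] by (simp add: co_def add.commute)
  also have "\<dots> = cc Q m n t" unfolding k_def by (rule cc_alt[OF nm, symmetric])
  finally show ?thesis by (simp only: k_def)
qed

lemma AA_0: "AA Q 0 t x = 1" by (simp add: AA_def cc_def aa_def co_def)
lemma AA_1: "AA Q (Suc 0) t x = x^2 + 1 - t"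
  by (simp add: AA_def cc_def aa_def co_def algebra_simps power2_eq_square)

end

lemma qctx_q: "0 < q \<Longrightarrow> q < 1 \<Longrightarrow> qctx (complex_of_real q)"
proof
  assume q: "0 < q" "q < 1"
  then show "complex_of_real q \<noteq> 0" by simp
  fix i
  have "q^Suc i < 1" using q by (rule power_Suc_less_one)
  then have "q^Suc i \<noteq> 1" by simp
  then show "complex_of_real q ^ Suc i \<noteq> 1"
    by (metis of_real_eq_1_iff of_real_power)
qed

lemma main_part1:
  assumes q: "0 < q" "q < 1" and x: "x \<noteq> 0"
  shows "x ^ m * qLommel q m \<nu> x = AA (complex_of_real q) m (complex_of_real q powr \<nu>) x"
proof -
  interpret qctx "complex_of_real q" by (rule qctx_q[OF q])
  define Q where "Q = complex_of_real q"
  have p1: "Q powr (\<nu> + 1) = Q powr \<nu> * Q" for \<nu> by (simp add: powr_add)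
  have p2: "Q powr (\<nu> + 2) = Q powr \<nu> * Q^2" for \<nu> by (simp add: powr_add)
  have R2: "qLommel q (Suc (Suc m)) \<nu> x = (x + (1 - Q powr \<nu>) / x) * qLommel q (Suc m) (\<nu> + 1) x
     - qLommel q m (\<nu> + 2) x" for m \<nu> by (simp add: Q_def)
  have "\<forall>\<nu>. x ^ m * qLommel q m \<nu> x = AA Q m (Q powr \<nu>) x \<and>
          x ^ Suc m * qLommel q (Suc m) \<nu> x = AA Q (Suc m) (Q powr \<nu>) x"
  proof (induction m)
    case 0
    show ?case using x by (simp add: AA_0 AA_1 Q_def field_simps power2_eq_square)
  next
    case (Suc m)
    show ?case
    proof
      fix \<nu>
      have "x ^ Suc (Suc m) * qLommel q (Suc (Suc m)) \<nu> x =
        (x^2 + 1 - Q powr \<nu>) * (x ^ Suc m * qLommel q (Suc m) (\<nu> + 1) x)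
        - x^2 * (x ^ m * qLommel q m (\<nu> + 2) x)"
        unfolding R2 using x by (simp add: field_simps power2_eq_square)
      also have "\<dots> = AA Q (Suc (Suc m)) (Q powr \<nu>) x"
        using Suc.IH by (simp add: AA_rec[folded Q_def] p1 p2)
      finally show "x ^ Suc m * qLommel q (Suc m) \<nu> x = AA Q (Suc m) (Q powr \<nu>) x \<and>
          x ^ Suc (Suc m) * qLommel q (Suc (Suc m)) \<nu> x = AA Q (Suc (Suc m)) (Q powr \<nu>) x"
        using Suc.IH by simp
    qed
  qed
  then show ?thesis by (simp add: Q_def)
qed



context qctx begin
lemma te_aux1: "(a1::complex) * hh / ff * (tt * yy) = (a1 * yy) * hh / ff * tt"
  by (simp add: divide_simps mult_ac)
lemma te_aux2: "(ff::complex) \<noteq> 0 \<Longrightarrow> (sgn1 * g1 * ff) * (g2 * ff) / (ff * ff) * tt = (sgn1 * g1 * g2) * tt"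
  by (simp add: divide_simps mult_ac)

lemma term_eq: "qpoch (inverse (Q^k)) Q j * qpoch (Q^(n+1)) Q j / (qf Q j * qf Q j) * (t^j * Q^(j*k))
   = co Q k n j * t^j"
proof -
  have jk: "Q^(j*k) = Q^(k*j)" by (simp only: mult.commute)
  show ?thesis
    unfolding jk te_aux1 L_G L_H co_def by (rule te_aux2) simp
qed
end
theorem mainTheorem15:
  fixes q :: real and \<nu> x :: complex and m :: nat
  assumes "0 < q" and "q < 1" and "x \<noteq> 0"
  shows "x ^ m * qLommel q m \<nu> x =
           (\<Sum>n = 0..m. x ^ (2 * n) *
              (\<Sum>j = 0..m - n.
                 qpoch (complex_of_real q powr (of_int (int n - int m))) (complex_of_real q) j
                 * qpoch (complex_of_real q ^ (n + 1)) (complex_of_real q) j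
                 / (qpoch (complex_of_real q) (complex_of_real q) j
                    * qpoch (complex_of_real q) (complex_of_real q) j)
                 * complex_of_real q powr (of_nat j * (\<nu> + of_nat m - of_nat n))))
       \<and> ((\<forall>i::nat. complex_of_real q powr (\<nu> + of_nat i) \<noteq> 1) \<longrightarrow>
           qLommel q m \<nu> x =
           (\<Sum>n = 0..m. x powi (2 * int n - int m)
              * qpoch (complex_of_real q powr \<nu>) (complex_of_real q) (m - n)
              / qpoch (complex_of_real q) (complex_of_real q) n
              * (\<Sum>j = 0..n.
                   qpoch (complex_of_real q powr (- of_nat n)) (complex_of_real q) j
                   * qpoch (complex_of_real q powr (\<nu> + of_nat m - of_nat n)) (complex_of_real q) j
                   / (qpoch (complex_of_real q) (complex_of_real q) j
                      * qpoch (complex_of_real q powr \<nu>) (complex_of_real q) j)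
                   * complex_of_real q ^ (j * (n + 1)))))"
proof -
  interpret qctx "complex_of_real q" by (rule qctx_q) (use assms in auto)
  define Q where "Q = complex_of_real q"
  define t where "t = Q powr \<nu>"
  have Qnz': "Q \<noteq> 0" using Qnz by (simp add: Q_def)
  have main: "x ^ m * qLommel q m \<nu> x = AA Q m t x"
    using main_part1[OF assms] by (simp add: Q_def t_def)
  have pw1: "Q powr (of_int (int n - int m)) = inverse (Q^(m-n))" if "n \<le> m" for n
  proof -
    have "(of_int (int n - int m) :: complex) = - of_nat (m-n)" using that by (simp add: of_nat_diff)
    then show ?thesis using Qnz' by (simp add: powr_minus)
  qed
  have pw2: "Q powr (\<nu> + of_nat m - of_nat n) = t * Q^(m-n)" if "n \<le> m" for n
  proof -
    have e: "\<nu> + of_nat m - of_nat n = \<nu> + of_nat (m-n)" using that by (simp add: of_nat_diff)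
    show ?thesis unfolding e using Qnz' by (simp add: powr_add t_def)
  qed
  have pw3: "Q powr (of_nat j * (\<nu> + of_nat m - of_nat n)) = t^j * Q^(j*(m-n))" if "n \<le> m" for n j
    using powr_power[OF Qnz', of "\<nu> + of_nat m - of_nat n" j, symmetric] pw2[OF that]
    by (simp add: power_mult_distrib power_mult mult.commute[of j])
  have part1: "x ^ m * qLommel q m \<nu> x =
           (\<Sum>n = 0..m. x ^ (2 * n) *
              (\<Sum>j = 0..m - n.
                 qpoch (Q powr (of_int (int n - int m))) Q j
                 * qpoch (Q ^ (n + 1)) Q j
                 / (qf Q j * qf Q j)
                 * Q powr (of_nat j * (\<nu> + of_nat m - of_nat n))))"
    unfolding main AA_def atLeast0AtMost lessThan_Suc_atMost[symmetric]
  proof (intro sum.cong refl arg_cong2[where f="(*)"])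
    fix n assume "n \<in> {..<Suc m}"
    then have nm: "n \<le> m" by simp
    show "cc Q m n t = (\<Sum>j<Suc (m - n). qpoch (Q powr (of_int (int n - int m))) Q j
                 * qpoch (Q ^ (n + 1)) Q j / (qf Q j * qf Q j)
                 * Q powr (of_nat j * (\<nu> + of_nat m - of_nat n)))"
      unfolding cc_alt[folded Q_def, OF nm] pw1[OF nm] pw3[OF nm] term_eq[folded Q_def] ..
  qed
  have part2: "qLommel q m \<nu> x =
           (\<Sum>n = 0..m. x powi (2 * int n - int m)
              * qpoch t Q (m - n) / qf Q n
              * (\<Sum>j = 0..n.
                   qpoch (Q powr (- of_nat n)) Q j
                   * qpoch (Q powr (\<nu> + of_nat m - of_nat n)) Q j
                   / (qf Q j * qpoch t Q j)
                   * Q ^ (j * (n + 1))))"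
    if H: "\<forall>i::nat. Q powr (\<nu> + of_nat i) \<noteq> 1"
  proof -
    have tq: "t * Q^i \<noteq> 1" for i using H Qnz' by (simp add: powr_add t_def)
    have "qLommel q m \<nu> x = AA Q m t x / x^m" using main assms(3) by (simp add: field_simps)
    also have "\<dots> = (\<Sum>n<Suc m. x^(2*n) / x^m * cc Q m n t)"
      unfolding AA_def sum_divide_distrib by (simp add: mult_ac del: sum.lessThan_Suc)
    also have "\<dots> = (\<Sum>n = 0..m. x powi (2 * int n - int m)
              * qpoch t Q (m - n) / qf Q n
              * (\<Sum>j = 0..n.
                   qpoch (Q powr (- of_nat n)) Q j
                   * qpoch (Q powr (\<nu> + of_nat m - of_nat n)) Q j
                   / (qf Q j * qpoch t Q j)
                   * Q ^ (j * (n + 1))))"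
      unfolding atLeast0AtMost lessThan_Suc_atMost[symmetric]
    proof (intro sum.cong refl)
      fix n assume "n \<in> {..<Suc m}"
      then have nm: "n \<le> m" by simp
      have xp: "x powi (2 * int n - int m) = x^(2*n) / x^m"
      proof -
        have e: "2 * int n - int m = int (2*n) - int m" by simp
        have "x powi (int (2*n) - int m) = x powi (int (2*n)) / x powi (int m)"
          using assms(3) by (rule power_int_diff[OF disjI1])
        then show ?thesis unfolding e by (simp only: power_int_of_nat)
      qed
      have pn: "Q powr (- of_nat n) = inverse (Q^n)" using Qnz' by (simp add: powr_minus)
      show "x^(2*n) / x^m * cc Q m n t = x powi (2 * int n - int m)
              * qpoch t Q (m - n) / qf Q n
              * (\<Sum>j<Suc n.
                   qpoch (Q powr (- of_nat n)) Q j
                   * qpoch (Q powr (\<nu> + of_nat m - of_nat n)) Q j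
                   / (qf Q j * qpoch t Q j)
                   * Q ^ (j * (n + 1)))"
        unfolding xp pn pw2[OF nm]
          D_eq[folded Q_def, OF nm tq, symmetric]
        by (simp add: mult_ac)
    qed
    finally show ?thesis .
  qed
  show ?thesis using part1 part2 unfolding Q_def t_def qf_def by blast
qed


end
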